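(* Let $m\ge1$, $x_0\in S^m_1$, and let $u\colon[0,\tau]\to\mathbb R^{m+1}_1$ be absolutely continuous with $\langle u(t),x_0\rangle_J=0$ for all $t$. Let $(s,R)\colon[0,\tau]\to\mathbb R^{m+1}\times GL(m+1)$ be the absolutely continuous solution of $$\dot s(t)=u(t),\qquad \dot R(t)=R(t)\big(u(t)x_0^{\mathbf t}-x_0u(t)^{\mathbf t}\big)J,\qquad s(0)=0,\ R(0)=I_{m+1}.$$ Then $R(t)\in O^{++}_1(m+1)$ for all $t$, and with $x(t)=R(t)x_0$ and $g(t)=(s(t),R(t)^{-1})$, the curve $(x,g)$ is a $G$-rolling of $M=S^m_1$ on $\widehat M=T^{\mathrm{aff}}_{x_0}S^m_1$ without slipping or twisting (for any of the three choices of $G_1(m+1)$), with development $\widehat x(t)=s(t)+x_0$.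
   Context: $\mathbb R^{m+1}_1$ is $\mathbb R^{m+1}$ with $\langle x,y\rangle_J=x^{\mathbf t}Jy$, $J=\mathrm{diag}(-1,I_m)$. The Lorentzian sphere is $S^m_1=\{x\in\mathbb R^{m+1}_1:\langle x,x\rangle_J=1\}$; $T_{x_0}S^m_1=\{v:\langle v,x_0\rangle_J=0\}$ and $T^{\mathrm{aff}}_{x_0}S^m_1=x_0+T_{x_0}S^m_1$ (the affine tangent space, a pseudo-Riemannian submanifold of the same dimension and index). $O_1(m+1)=\{X:X^{\mathbf t}JX=J\}$; writing $X$ in blocks with upper-left $1\times1$ block $X_T$ and lower-right $m\times m$ block $X_S$, $O^{++}_1(m+1)$ is the set with $X_T>0$ and $\det X_S>0$. $G_1(m+1)$ is one of $O^{++}\cup O^{--}$, $O^{++}\cup O^{+-}$, $O^{++}\cup O^{-+}$ (corresponding to orientation, time-orientation, space-orientation). The group $\mathbb R^{m+1}_1\rtimes G_1(m+1)$ acts by $(s,A)x=s+Ax$, so $d_xg=A$ for $g=(s,A)$. Definition (rolling). For connected $G$-oriented pseudo-Riemannian submanifolds $M,\widehat M\subset\mathbb R^n_\nu$ of equal dimension and index, a $G$-rolling of $M$ on $\widehat M$ without slipping or twisting is an absolutely continuous curve $(x,g)\colon[0,\tau]\to M\times(\mathbb R^n_\nu\rtimes G_\nu(n))$ such that for a.e. $t$: (i) $\widehat x(t):=g(t)x(t)\in\widehat M$; (ii) $d_{x(t)}g(t)T_{x(t)}M=T_{\widehat x(t)}\widehat M$; (iii) $d_{x(t)}g(t)|_{T_{x(t)}M}$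 preserves $G$-orientation; (iv) $\dot{\widehat x}(t)=d_{x(t)}g(t)\dot x(t)$; (v) $d_{x(t)}g(t)\frac{D}{dt}Z=\frac{D}{dt}(d_{x(t)}g(t)Z)$ for every tangent field $Z$ along $x$; (vi) $d_{x(t)}g(t)\frac{D^\perp}{dt}\Psi=\frac{D^\perp}{dt}(d_{x(t)}g(t)\Psi)$ for every normal field $\Psi$ along $x$. Here $\frac{D}{dt}$ is the tangential projection of the ambient derivative and $\frac{D^\perp}{dt}$ the normal projection. *)

theory Defs
  imports "HOL-Analysis.Analysis"
begin

text \<open>Model of the Lorentz space R^(m+1)_1: the index type is 'm option (finite 'm),
  so that CARD('m option) = m+1 with m = CARD('m) >= 1.  The index None is the
  time coordinate (the first coordinate in the paper), the indices Some i are the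
  m space coordinates.\<close>

type_synonym 'm lvec = "real ^ 'm option"
type_synonym 'm lmat = "real ^ 'm option ^ 'm option"

definition Jmat :: "('m::finite) lmat" where
  "Jmat = (\<chi> i j. if i = j then (if i = None then -1 else 1) else 0)"

definition linner :: "('m::finite) lvec \<Rightarrow> 'm lvec \<Rightarrow> real" where
  "linner x y = x \<bullet> (Jmat *v y)"

definition outer :: "('m::finite) lvec \<Rightarrow> 'm lvec \<Rightarrow> 'm lmat" where
  "outer u v = (\<chi> i j. u $ i * v $ j)"

definition lsphere :: "('m::finite) lvec set" where
  "lsphere = {x. linner x x = 1}"

definition tspace_sphere :: "('m::finite) lvec \<Rightarrow> 'm lvec set" where
  "tspace_sphere x0 = {v. linner v x0 = 0}"

definition aff_tspace :: "('m::finite) lvec \<Rightarrow> 'm lvec set" where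
  "aff_tspace x0 = {x0 + v | v. v \<in> tspace_sphere x0}"

definition O1 :: "('m::finite) lmat set" where
  "O1 = {X. transpose X ** Jmat ** X = Jmat}"

definition time_block :: "('m::finite) lmat \<Rightarrow> real" where
  "time_block X = X $ None $ None"

definition space_block :: "('m::finite) lmat \<Rightarrow> real ^ 'm ^ 'm" where
  "space_block X = (\<chi> i j. X $ Some i $ Some j)"

definition O1pp :: "('m::finite) lmat set" where
  "O1pp = {X \<in> O1. time_block X > 0 \<and> det (space_block X) > 0}"
definition O1pm :: "('m::finite) lmat set" where
  "O1pm = {X \<in> O1. time_block X > 0 \<and> det (space_block X) < 0}"
definition O1mp :: "('m::finite) lmat set" where
  "O1mp = {X \<in> O1. time_block X < 0 \<and> det (space_block X) > 0}"
definition O1mm :: "('m::finite) lmat set" where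
  "O1mm = {X \<in> O1. time_block X < 0 \<and> det (space_block X) < 0}"

text \<open>The three admissible choices of G_1(m+1): orientation, time-orientation,
  space-orientation.\<close>
definition G1_choices :: "('m::finite) lmat set set" where
  "G1_choices = {O1pp \<union> O1mm, O1pp \<union> O1pm, O1pp \<union> O1mp}"

definition abs_cont_on :: "(real \<Rightarrow> 'a::real_normed_vector) \<Rightarrow> real \<Rightarrow> real \<Rightarrow> bool" where
  "abs_cont_on f a b \<longleftrightarrow>
     (\<forall>\<epsilon>>0. \<exists>\<delta>>0. \<forall>(n::nat) (p::nat \<Rightarrow> real) (q::nat \<Rightarrow> real).
        (\<forall>i<n. a \<le> p i \<and> p i \<le> q i \<and> q i \<le> b) \<and>
        (\<forall>i<n. \<forall>j<n. i \<noteq> j \<longrightarrow> q i \<le> p j \<or> q j \<le> p i) \<and>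
        (\<Sum>i<n. q i - p i) < \<delta>
        \<longrightarrow> (\<Sum>i<n. norm (f (q i) - f (p i))) < \<epsilon>)"

definition nspace :: "('m::finite) lvec set \<Rightarrow> 'm lvec set" where
  "nspace T = {v. \<forall>y\<in>T. linner v y = 0}"

definition tproj :: "('m::finite) lvec set \<Rightarrow> 'm lvec \<Rightarrow> 'm lvec" where
  "tproj T v = (THE w. w \<in> T \<and> v - w \<in> nspace T)"

definition nproj :: "('m::finite) lvec set \<Rightarrow> 'm lvec \<Rightarrow> 'm lvec" where
  "nproj T v = v - tproj T v"

text \<open>Preservation of G-orientation by a linear map A restricted to a tangent
  space T of a hypersurface, where the G-orientations of the two hypersurfaces are
  the ones induced from the ambient G-orientation of R^(m+1)_1 by the chosen unit
  normals N (at the source point) and Nh (at the target point): the isometric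
  extension of A|T sending N to Nh lies in G.\<close>
definition preserves_G_orient ::
  "('m::finite) lmat set \<Rightarrow> 'm lvec set \<Rightarrow> 'm lvec \<Rightarrow> 'm lvec \<Rightarrow> 'm lmat \<Rightarrow> bool" where
  "preserves_G_orient G T N Nh A \<longleftrightarrow>
     (\<exists>L\<in>G. (\<forall>v\<in>T. L *v v = A *v v) \<and> L *v N = Nh)"

text \<open>G-rolling without slipping or twisting of a hypersurface M (tangent spaces TM,
  unit normal field NM defining its induced G-orientation) on a hypersurface Mh
  (tangent spaces TMh, unit normal field NMh), along the curve (x,g) with
  g(t) = (s t, A t) in R^(m+1)_1 semidirect G, acting by g y = s + A y, so d g = A.\<close>
definition rolling ::
  "('m::finite) lmat set \<Rightarrow>
   'm lvec set \<Rightarrow> ('m lvec \<Rightarrow> 'm lvec set) \<Rightarrow> ('m lvec \<Rightarrow> 'm lvec) \<Rightarrow>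
   'm lvec set \<Rightarrow> ('m lvec \<Rightarrow> 'm lvec set) \<Rightarrow> ('m lvec \<Rightarrow> 'm lvec) \<Rightarrow>
   real \<Rightarrow> (real \<Rightarrow> 'm lvec) \<Rightarrow> (real \<Rightarrow> 'm lvec) \<Rightarrow> (real \<Rightarrow> 'm lmat) \<Rightarrow> bool" where
  "rolling G M TM NM Mh TMh NMh \<tau> x s A \<longleftrightarrow>
    (let xh = (\<lambda>t. s t + A t *v x t) in
     abs_cont_on (\<lambda>t. (x t, s t, A t)) 0 \<tau> \<and>
     (\<forall>t\<in>{0..\<tau>}. x t \<in> M \<and> A t \<in> G) \<and>
     (AE t in lebesgue. t \<in> {0..\<tau>} \<longrightarrow>
        xh t \<in> Mh \<and>
        (\<lambda>v. A t *v v) ` TM (x t) = TMh (xh t) \<and>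
        preserves_G_orient G (TM (x t)) (NM (x t)) (NMh (xh t)) (A t) \<and>
        (\<exists>a b. (x has_vector_derivative a) (at t within {0..\<tau>}) \<and>
               (xh has_vector_derivative b) (at t within {0..\<tau>}) \<and>
               b = A t *v a) \<and>
        (\<forall>Z Z' W'. (\<forall>r\<in>{0..\<tau>}. Z r \<in> TM (x r)) \<and>
              (Z has_vector_derivative Z') (at t within {0..\<tau>}) \<and>
              ((\<lambda>r. A r *v Z r) has_vector_derivative W') (at t within {0..\<tau>})
              \<longrightarrow> A t *v tproj (TM (x t)) Z' = tproj (TMh (xh t)) W') \<and>
        (\<forall>\<Psi> \<Psi>' W'. (\<forall>r\<in>{0..\<tau>}. \<Psi> r \<in> nspace (TM (x r))) \<and>
              (\<Psi> has_vector_derivative \<Psi>') (at t within {0..\<tau>}) \<and>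
              ((\<lambda>r. A r *v \<Psi> r) has_vector_derivative W') (at t within {0..\<tau>})
              \<longrightarrow> A t *v nproj (TM (x t)) \<Psi>' = nproj (TMh (xh t)) W')))"

end

theory Submission
  imports Defs
begin


lemma interval_order:
  fixes u v u' v' :: real
  assumes "u < v" "u' < v'" "{u<..<v} \<inter> {u'<..<v'} = {}"
  shows "v \<le> u' \<or> v' \<le> u"
proof (rule ccontr)
  assume "\<not> ?thesis"
  then have "(max u u' + min v v')/2 \<in> {u<..<v} \<inter> {u'<..<v'}"
    using assms by (auto simp: max_def min_def split: if_split_asm)
  then show False using assms by blast
qed

lemma ac_const_aux:
  fixes f :: "real \<Rightarrow> 'a::real_normed_vector"
  assumes ac: "abs_cont_on f a b" and ab: "a \<le> b" and N: "negligible N"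
    and d: "\<And>x. x \<in> {a..b} - N \<Longrightarrow> (f has_vector_derivative 0) (at x within {a..b})"
    and e: "e > 0"
  shows "norm (f b - f a) \<le> e * (b - a) + e"
proof -
  obtain \<delta> where \<delta>: "\<delta> > 0" and
    H: "\<forall>(n::nat) (p::nat \<Rightarrow> real) (q::nat \<Rightarrow> real).
        (\<forall>i<n. a \<le> p i \<and> p i \<le> q i \<and> q i \<le> b) \<and>
        (\<forall>i<n. \<forall>j<n. i \<noteq> j \<longrightarrow> q i \<le> p j \<or> q j \<le> p i) \<and>
        (\<Sum>i<n. q i - p i) < \<delta>
        \<longrightarrow> (\<Sum>i<n. norm (f (q i) - f (p i))) < e"
    using ac e unfolding abs_cont_on_def by blast
  have acd: "\<And>n p q. (\<forall>i<(n::nat). a \<le> (p::nat\<Rightarrow>real) i \<and> p i \<le> q i \<and> (q::nat\<Rightarrow>real) i \<le> b) \<Longrightarrow>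
      (\<forall>i<n. \<forall>j<n. i \<noteq> j \<longrightarrow> q i \<le> p j \<or> q j \<le> p i) \<Longrightarrow>
      (\<Sum>i<n. q i - p i) < \<delta> \<Longrightarrow> (\<Sum>i<n. norm (f (q i) - f (p i))) < e"
    using H by blast
  have Nl: "N \<in> sets lebesgue" using N negligible_iff_null_sets null_setsD2 by blast
  obtain U where U: "open U" "N \<subseteq> U" "(U - N) \<in> lmeasurable" "emeasure lebesgue (U - N) < ennreal \<delta>"
    using sets_lebesgue_outer_open[OF Nl \<delta>] by metis
  have sd: "negligible (sym_diff (U - N) U)"
    by (rule negligible_subset[OF N]) auto
  have Ul: "U \<in> lmeasurable" using lmeasurable_negligible_symdiff[OF U(3) sd] .
  have "measure lebesgue U = measure lebesgue (U - N)"
    using measure_negligible_symdiff[OF U(3) sd] by simp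
  also have "\<dots> < \<delta>"
    using U(3,4) \<delta> by (simp add: emeasure_eq_measure2 ennreal_less_iff)
  finally have mU: "measure lebesgue U < \<delta>" .
  have dN: "\<exists>r>0. ball x r \<subseteq> U" if "x \<in> N" for x
    using U that open_contains_ball by blast
  have dE: "\<exists>r>0. \<forall>y\<in>{a..b}. \<bar>y - x\<bar> < r \<longrightarrow> norm (f y - f x) \<le> e * \<bar>y - x\<bar>"
    if "x \<in> {a..b} - N" for x
    using d[OF that] e unfolding has_vector_derivative_def has_derivative_within_alt
    by (auto simp: real_norm_def)
  define r where "r x = (if x \<in> N then (SOME r. r>0 \<and> ball x r \<subseteq> U)
     else if x \<in> {a..b} then (SOME r. r>0 \<and> (\<forall>y\<in>{a..b}. \<bar>y - x\<bar> < r \<longrightarrow> norm (f y - f x) \<le> e * \<bar>y - x\<bar>)) else 1)" for x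
  have rN: "r x > 0 \<and> ball x (r x) \<subseteq> U" if "x \<in> N" for x
    using someI_ex[OF dN[OF that]] that unfolding r_def by simp
  have rE: "r x > 0 \<and> (\<forall>y\<in>{a..b}. \<bar>y - x\<bar> < r x \<longrightarrow> norm (f y - f x) \<le> e * \<bar>y - x\<bar>)"
    if "x \<in> {a..b} - N" for x
    using someI_ex[OF dE[OF that]] that unfolding r_def by simp
  have rpos: "\<forall>x. r x > 0"
  proof
    fix x show "r x > 0"
    proof (cases "x \<in> {a..b} - N \<or> x \<in> N")
      case True thus ?thesis using rN rE by blast
    next
      case False thus ?thesis unfolding r_def by auto
    qed
  qed
  obtain p where p: "p tagged_division_of {a..b}" and fine: "(\<lambda>x. ball x (r x)) fine p"
    using fine_division_exists_real[OF gauge_ball_dependent[OF rpos]] by metis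
  have fp: "finite p" using tagged_division_ofD(1)[OF p] .
  have pK: "\<exists>u v. K = {u..v} \<and> u \<le> x \<and> x \<le> v \<and> a \<le> u \<and> v \<le> b \<and> K \<subseteq> ball x (r x)"
    if xK: "(x,K) \<in> p" for x K
  proof -
    obtain u v where K: "K = cbox u v" using tagged_division_ofD(4)[OF p xK] by blast
    have "x \<in> K" "K \<subseteq> {a..b}" using tagged_division_ofD(2,3)[OF p xK] by auto
    moreover have "K \<subseteq> ball x (r x)" using fine xK unfolding fine_def by blast
    ultimately show ?thesis using K by auto
  qed
  have tele: "f b - f a = (\<Sum>(x,K)\<in>p. f (Sup K) - f (Inf K))"
    using additive_tagged_division_1[OF ab p, of f] by simp
  define P1 where "P1 = {z\<in>p. fst z \<in> N \<and> Inf (snd z) < Sup (snd z)}"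
  define P2 where "P2 = {z\<in>p. fst z \<notin> N}"
  have "norm (f b - f a) \<le> (\<Sum>z\<in>p. norm (f (Sup (snd z)) - f (Inf (snd z))))"
    unfolding tele by (rule order_trans[OF norm_sum]) (simp add: case_prod_unfold)
  also have "\<dots> = (\<Sum>z\<in>P1. norm (f (Sup (snd z)) - f (Inf (snd z)))) +
                  (\<Sum>z\<in>P2. norm (f (Sup (snd z)) - f (Inf (snd z))))"
  proof -
    have "(\<Sum>z\<in>p. norm (f (Sup (snd z)) - f (Inf (snd z)))) = (\<Sum>z\<in>P1 \<union> P2. norm (f (Sup (snd z)) - f (Inf (snd z))))"
    proof (rule sum.mono_neutral_right)
      show "finite p" by fact
      show "P1 \<union> P2 \<subseteq> p" unfolding P1_def P2_def by auto
      show "\<forall>i\<in>p - (P1 \<union> P2). norm (f (Sup (snd i)) - f (Inf (snd i))) = 0"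
      proof
        fix z assume z: "z \<in> p - (P1 \<union> P2)"
        obtain x K where zz: "z = (x,K)" by force
        obtain u v where "K = {u..v}" "u \<le> v" using pK z zz by force
        then have "Inf K = Sup K" using z zz unfolding P1_def P2_def by auto
        then show "norm (f (Sup (snd z)) - f (Inf (snd z))) = 0" by (simp add: zz)
      qed
    qed
    also have "\<dots> = (\<Sum>z\<in>P1. norm (f (Sup (snd z)) - f (Inf (snd z)))) +
                  (\<Sum>z\<in>P2. norm (f (Sup (snd z)) - f (Inf (snd z))))"
      by (rule sum.union_disjoint) (use fp in \<open>auto simp: P1_def P2_def\<close>)
    finally show ?thesis .
  qed
  also have "\<dots> \<le> e + e * (b - a)"
  proof (rule add_mono)
    show "(\<Sum>z\<in>P2. norm (f (Sup (snd z)) - f (Inf (snd z)))) \<le> e * (b - a)"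
    proof -
      have "(\<Sum>z\<in>P2. norm (f (Sup (snd z)) - f (Inf (snd z)))) \<le> (\<Sum>z\<in>P2. e * (Sup (snd z) - Inf (snd z)))"
      proof (rule sum_mono)
        fix z assume z: "z \<in> P2"
        obtain x K where zz: "z = (x,K)" by force
        obtain u v where K: "K = {u..v}" "u \<le> x" "x \<le> v" "a \<le> u" "v \<le> b" "K \<subseteq> ball x (r x)"
          using pK z zz unfolding P2_def by force
        have xE: "x \<in> {a..b} - N" using z zz K unfolding P2_def by auto
        have "u \<in> ball x (r x)" "v \<in> ball x (r x)"
          using K(2,3) K(6)[unfolded K(1)] by (meson atLeastAtMost_iff order_refl order_trans subsetD)+
        then have uin: "\<bar>u - x\<bar> < r x" "\<bar>v - x\<bar> < r x" by (auto simp: dist_real_def abs_minus_commute)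
        have "norm (f v - f u) \<le> norm (f v - f x) + norm (f x - f u)"
          using norm_triangle_ineq[of "f v - f x" "f x - f u"] by simp
        also have "\<dots> \<le> e * \<bar>v - x\<bar> + e * \<bar>u - x\<bar>"
        proof (rule add_mono)
          have "v \<in> {a..b}" "u \<in> {a..b}" using K by auto
          then show "norm (f v - f x) \<le> e * \<bar>v - x\<bar>" "norm (f x - f u) \<le> e * \<bar>u - x\<bar>"
            using rE[OF xE] uin by (auto simp: norm_minus_commute)
        qed
        also have "\<dots> = e * (v - u)" using K by (simp add: algebra_simps)
        finally show "norm (f (Sup (snd z)) - f (Inf (snd z))) \<le> e * (Sup (snd z) - Inf (snd z))"
          using K zz by (simp add: cSup_atLeastAtMost cInf_atLeastAtMost)
      qed
      also have "\<dots> \<le> (\<Sum>z\<in>p. e * (Sup (snd z) - Inf (snd z)))"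
      proof (rule sum_mono2[OF fp])
        show "P2 \<subseteq> p" unfolding P2_def by auto
        fix z assume "z \<in> p - P2"
        then obtain x K where zz: "z = (x,K)" "(x,K) \<in> p" by (cases z) auto
        obtain u v where K: "K = {u..v}" "u \<le> v" using pK zz by force
        show "0 \<le> e * (Sup (snd z) - Inf (snd z))" using K zz e by simp
      qed
      also have "\<dots> = e * (\<Sum>(x,K)\<in>p. Henstock_Kurzweil_Integration.content K)"
      proof -
        have "\<And>z. z \<in> p \<Longrightarrow> Sup (snd z) - Inf (snd z) = Henstock_Kurzweil_Integration.content (snd z)"
        proof -
          fix z assume "z \<in> p"
          then obtain x K where zz: "z = (x,K)" "(x,K) \<in> p" by (cases z) auto
          obtain u v where K: "K = {u..v}" "u \<le> v" using pK zz by force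
          show "Sup (snd z) - Inf (snd z) = Henstock_Kurzweil_Integration.content (snd z)" using K zz by simp
        qed
        then show ?thesis by (simp add: sum_distrib_left case_prod_unfold)
      qed
      also have "\<dots> = e * (b - a)"
        using additive_content_tagged_division[of p a b] p ab by simp
      finally show ?thesis .
    qed
  next
    show "(\<Sum>z\<in>P1. norm (f (Sup (snd z)) - f (Inf (snd z)))) \<le> e"
    proof -
      have fP1: "finite P1" using fp unfolding P1_def by auto
      have P1K: "\<exists>u v. snd z = {u..v} \<and> u < v \<and> a \<le> u \<and> v \<le> b \<and> snd z \<subseteq> U" if zP: "z \<in> P1" for z
      proof -
        obtain x K where zz: "z = (x,K)" by force
        obtain u v where K: "K = {u..v}" "u \<le> x" "x \<le> v" "a \<le> u" "v \<le> b" "K \<subseteq> ball x (r x)"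
          using pK zP zz unfolding P1_def by force
        have xN: "x \<in> N" and IS: "Inf K < Sup K" using zP zz unfolding P1_def by auto
        then have "u < v" using K by auto
        moreover have "K \<subseteq> U" using K(6) rN[OF xN] by blast
        ultimately show ?thesis using K zz by auto
      qed
      have disj: "Sup (snd z) \<le> Inf (snd w) \<or> Sup (snd w) \<le> Inf (snd z)" if zw: "z \<in> P1" "w \<in> P1" "z \<noteq> w" for z w
      proof -
        obtain u v where zu: "snd z = {u..v}" "u < v" using P1K[OF zw(1)] by blast
        obtain u' v' where wu: "snd w = {u'..v'}" "u' < v'" using P1K[OF zw(2)] by blast
        have "z \<in> p" "w \<in> p" using zw unfolding P1_def by auto
        then have "interior (snd z) \<inter> interior (snd w) = {}"
          using tagged_division_ofD(5)[OF p, of "fst z" "snd z" "fst w" "snd w"] zw(3) by (simp add: prod_eq_iff)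
        then have "v \<le> u' \<or> v' \<le> u" using interval_order[OF zu(2) wu(2)] zu wu by simp
        then show ?thesis using zu wu by simp
      qed
      obtain g where g: "bij_betw g {..<card P1} P1"
        using ex_bij_betw_nat_finite[OF fP1] by (metis atLeast0LessThan)
      define n where "n = card P1"
      define pp where "pp i = Inf (snd (g i))" for i
      define qq where "qq i = Sup (snd (g i))" for i
      have gi: "g i \<in> P1" if "i < n" for i using g that unfolding n_def bij_betw_def by auto
      have c1: "\<forall>i<n. a \<le> pp i \<and> pp i \<le> qq i \<and> qq i \<le> b"
      proof (intro allI impI)
        fix i assume "i < n"
        then obtain u v where "snd (g i) = {u..v}" "u < v" "a \<le> u" "v \<le> b" using P1K gi by blast
        then show "a \<le> pp i \<and> pp i \<le> qq i \<and> qq i \<le> b" unfolding pp_def qq_def by simp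
      qed
      have c2: "\<forall>i<n. \<forall>j<n. i \<noteq> j \<longrightarrow> qq i \<le> pp j \<or> qq j \<le> pp i"
      proof (intro allI impI)
        fix i j assume ij: "i < n" "j < n" "i \<noteq> j"
        then have "g i \<noteq> g j" using g unfolding bij_betw_def inj_on_def n_def by auto
        then show "qq i \<le> pp j \<or> qq j \<le> pp i" using disj gi ij unfolding pp_def qq_def by blast
      qed
      have sumeq: "(\<Sum>i<n. h (g i)) = (\<Sum>z\<in>P1. h z)" for h :: "real \<times> real set \<Rightarrow> real"
        using sum.reindex_bij_betw[OF g] unfolding n_def by simp
      have len: "(\<Sum>i<n. qq i - pp i) = measure lebesgue (\<Union>(snd ` P1))"
      proof -
        have "(\<Sum>i<n. qq i - pp i) = (\<Sum>z\<in>P1. Sup (snd z) - Inf (snd z))"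
          unfolding pp_def qq_def using sumeq[of "\<lambda>z. Sup (snd z) - Inf (snd z)"] by simp
        also have "\<dots> = (\<Sum>z\<in>P1. measure lebesgue (snd z))"
        proof (rule sum.cong[OF refl])
          fix z assume "z \<in> P1"
          then obtain u v where "snd z = {u..v}" "u < v" using P1K by blast
          then show "Sup (snd z) - Inf (snd z) = measure lebesgue (snd z)" by simp
        qed
        also have "\<dots> = measure lebesgue (\<Union>(snd ` P1))"
        proof (rule measure_negligible_finite_Union_image[symmetric, OF fP1])
          fix z assume "z \<in> P1"
          then obtain u v where "snd z = {u..v}" using P1K by blast
          then show "snd z \<in> lmeasurable" by simp
        next
          show "pairwise (\<lambda>z w. negligible (snd z \<inter> snd w)) P1"
          proof (rule pairwiseI)
            fix z w assume zw: "z \<in> P1" "w \<in> P1" "z \<noteq> w"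
            obtain u v where zu: "snd z = {u..v}" "u < v" using P1K[OF zw(1)] by blast
            obtain u' v' where wu: "snd w = {u'..v'}" "u' < v'" using P1K[OF zw(2)] by blast
            have "v \<le> u' \<or> v' \<le> u" using disj[OF zw] zu wu by simp
            then have "snd z \<inter> snd w \<subseteq> {u', u}" using zu wu by auto
            then show "negligible (snd z \<inter> snd w)" by (rule negligible_subset[rotated]) auto
          qed
        qed
        finally show ?thesis .
      qed
      have "measure lebesgue (\<Union>(snd ` P1)) \<le> measure lebesgue U"
      proof (rule measure_mono_fmeasurable)
        show "\<Union>(snd ` P1) \<subseteq> U" using P1K by blast
        have "snd z \<in> sets lebesgue" if zP1: "z \<in> P1" for z
        proof -
          obtain u v where "snd z = {u..v}" using P1K zP1 by blast
          then show ?thesis by simp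
        qed
        then show "\<Union>(snd ` P1) \<in> sets lebesgue" using sets.finite_UN[OF fP1] by blast
        show "U \<in> fmeasurable lebesgue" using Ul .
      qed
      then have c3: "(\<Sum>i<n. qq i - pp i) < \<delta>" using len mU by linarith
      have "(\<Sum>i<n. norm (f (qq i) - f (pp i))) < e" using acd[OF c1 c2 c3] .
      moreover have "(\<Sum>i<n. norm (f (qq i) - f (pp i))) = (\<Sum>z\<in>P1. norm (f (Sup (snd z)) - f (Inf (snd z))))"
        unfolding pp_def qq_def using sumeq[of "\<lambda>z. norm (f (Sup (snd z)) - f (Inf (snd z)))"] by simp
      ultimately show ?thesis by simp
    qed
  qed
  finally show ?thesis by simp
qed

lemma ac_const:
  fixes f :: "real \<Rightarrow> 'a::real_normed_vector"
  assumes ac: "abs_cont_on f a b" and ab: "a \<le> b" and N: "negligible N"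
    and d: "\<And>x. x \<in> {a..b} - N \<Longrightarrow> (f has_vector_derivative 0) (at x within {a..b})"
  shows "f b = f a"
proof (rule ccontr)
  assume ne: "f b \<noteq> f a"
  define D where "D = norm (f b - f a)"
  have D: "D > 0" using ne unfolding D_def by simp
  define e where "e = D / (2 * (b - a + 1))"
  have e: "e > 0" using D ab unfolding e_def by simp
  have "D \<le> e * (b - a) + e" using ac_const_aux[OF ac ab N d e] unfolding D_def by simp
  also have "\<dots> = e * (b - a + 1)" by (simp add: algebra_simps)
  also have "\<dots> = D / 2" proof -
    have "b - a + 1 \<noteq> 0" using ab by simp
    then show ?thesis unfolding e_def by (simp add: field_simps)
  qed
  finally show False using D by simp
qed

lemma ac_restrict:
  assumes "abs_cont_on f a b" "a \<le> c" "d \<le> b"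
  shows "abs_cont_on f c d"
  using assms unfolding abs_cont_on_def
  by (smt (verit, ccfv_SIG))

lemma ac_const_on:
  fixes f :: "real \<Rightarrow> 'a::real_normed_vector"
  assumes ac: "abs_cont_on f a b" and N: "negligible N"
    and d: "\<And>x. x \<in> {a..b} - N \<Longrightarrow> (f has_vector_derivative 0) (at x within {a..b})"
    and x: "x \<in> {a..b}"
  shows "f x = f a"
proof (rule ac_const[OF ac_restrict[OF ac order_refl] _ N])
  show "x \<le> b" "a \<le> x" using x by auto
  fix y assume y: "y \<in> {a..x} - N"
  then have "y \<in> {a..b} - N" using x by auto
  from has_vector_derivative_within_subset[OF d[OF this]]
  show "(f has_vector_derivative 0) (at y within {a..x})" using x by auto
qed



lemma ac_continuous:
  assumes ac: "abs_cont_on f a b"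
  shows "continuous_on {a..b} f"
  unfolding continuous_on_iff
proof (intro ballI allI impI)
  fix x e assume x: "x \<in> {a..b}" and e: "(e::real) > 0"
  obtain \<delta> where \<delta>: "\<delta> > 0" and
    H: "\<forall>(n::nat) (p::nat \<Rightarrow> real) (q::nat \<Rightarrow> real).
        (\<forall>i<n. a \<le> p i \<and> p i \<le> q i \<and> q i \<le> b) \<and>
        (\<forall>i<n. \<forall>j<n. i \<noteq> j \<longrightarrow> q i \<le> p j \<or> q j \<le> p i) \<and>
        (\<Sum>i<n. q i - p i) < \<delta>
        \<longrightarrow> (\<Sum>i<n. norm (f (q i) - f (p i))) < e"
    using ac e unfolding abs_cont_on_def by blast
  have one: "norm (f w - f v) < e" if "a \<le> v" "v \<le> w" "w \<le> b" "w - v < \<delta>" for v w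
    using H[rule_format, of 1 "\<lambda>_. v" "\<lambda>_. w"] that by simp
  show "\<exists>d>0. \<forall>x'\<in>{a..b}. dist x' x < d \<longrightarrow> dist (f x') (f x) < e"
  proof (intro exI[of _ \<delta>] conjI ballI impI)
    show "\<delta> > 0" by fact
    fix x' assume x': "x' \<in> {a..b}" "dist x' x < \<delta>"
    show "dist (f x') (f x) < e"
    proof (cases "x \<le> x'")
      case True then show ?thesis using one[of x x'] x x' by (auto simp: dist_norm norm_minus_commute dist_real_def)
    next
      case False then show ?thesis using one[of x' x] x x' by (auto simp: dist_norm norm_minus_commute dist_real_def)
    qed
  qed
qed

lemma ac_combine:
  fixes f :: "real \<Rightarrow> 'a::real_normed_vector" and g :: "real \<Rightarrow> 'b::real_normed_vector"
    and h :: "real \<Rightarrow> 'c::real_normed_vector"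
  assumes f: "abs_cont_on f a b" and g: "abs_cont_on g a b" and A: "A \<ge> 0" and B: "B \<ge> 0"
    and h: "\<And>t t'. t \<in> {a..b} \<Longrightarrow> t' \<in> {a..b} \<Longrightarrow>
          norm (h t - h t') \<le> A * norm (f t - f t') + B * norm (g t - g t')"
  shows "abs_cont_on h a b"
  unfolding abs_cont_on_def
proof (intro allI impI)
  fix \<epsilon> :: real assume \<epsilon>: "\<epsilon> > 0"
  have e1: "\<epsilon>/(2*(A+1)) > 0" and e2: "\<epsilon>/(2*(B+1)) > 0" using \<epsilon> A B by simp_all
  obtain \<delta>1 where d1: "\<delta>1 > 0" and
    H1: "\<forall>(n::nat) (p::nat \<Rightarrow> real) (q::nat \<Rightarrow> real).
        (\<forall>i<n. a \<le> p i \<and> p i \<le> q i \<and> q i \<le> b) \<and>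
        (\<forall>i<n. \<forall>j<n. i \<noteq> j \<longrightarrow> q i \<le> p j \<or> q j \<le> p i) \<and>
        (\<Sum>i<n. q i - p i) < \<delta>1
        \<longrightarrow> (\<Sum>i<n. norm (f (q i) - f (p i))) < \<epsilon>/(2*(A+1))"
    using f e1 unfolding abs_cont_on_def by blast
  obtain \<delta>2 where d2: "\<delta>2 > 0" and
    H2: "\<forall>(n::nat) (p::nat \<Rightarrow> real) (q::nat \<Rightarrow> real).
        (\<forall>i<n. a \<le> p i \<and> p i \<le> q i \<and> q i \<le> b) \<and>
        (\<forall>i<n. \<forall>j<n. i \<noteq> j \<longrightarrow> q i \<le> p j \<or> q j \<le> p i) \<and>
        (\<Sum>i<n. q i - p i) < \<delta>2
        \<longrightarrow> (\<Sum>i<n. norm (g (q i) - g (p i))) < \<epsilon>/(2*(B+1))"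
    using g e2 unfolding abs_cont_on_def by blast
  show "\<exists>\<delta>>0. \<forall>(n::nat) (p::nat \<Rightarrow> real) (q::nat \<Rightarrow> real).
        (\<forall>i<n. a \<le> p i \<and> p i \<le> q i \<and> q i \<le> b) \<and>
        (\<forall>i<n. \<forall>j<n. i \<noteq> j \<longrightarrow> q i \<le> p j \<or> q j \<le> p i) \<and>
        (\<Sum>i<n. q i - p i) < \<delta>
        \<longrightarrow> (\<Sum>i<n. norm (h (q i) - h (p i))) < \<epsilon>"
  proof (intro exI[of _ "min \<delta>1 \<delta>2"] conjI allI impI)
    show "min \<delta>1 \<delta>2 > 0" using d1 d2 by simp
    fix n :: nat and p q :: "nat \<Rightarrow> real"
    assume HH: "(\<forall>i<n. a \<le> p i \<and> p i \<le> q i \<and> q i \<le> b) \<and>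
        (\<forall>i<n. \<forall>j<n. i \<noteq> j \<longrightarrow> q i \<le> p j \<or> q j \<le> p i) \<and>
        (\<Sum>i<n. q i - p i) < min \<delta>1 \<delta>2"
    have sf: "(\<Sum>i<n. norm (f (q i) - f (p i))) < \<epsilon>/(2*(A+1))" using H1 HH by auto
    have sg: "(\<Sum>i<n. norm (g (q i) - g (p i))) < \<epsilon>/(2*(B+1))" using H2 HH by auto
    have "(\<Sum>i<n. norm (h (q i) - h (p i))) \<le>
          (\<Sum>i<n. A * norm (f (q i) - f (p i)) + B * norm (g (q i) - g (p i)))"
      by (rule sum_mono) (use HH h in auto)
    also have "\<dots> = A * (\<Sum>i<n. norm (f (q i) - f (p i))) + B * (\<Sum>i<n. norm (g (q i) - g (p i)))"
      by (simp add: sum.distrib sum_distrib_left)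
    also have "\<dots> \<le> A * (\<epsilon>/(2*(A+1))) + B * (\<epsilon>/(2*(B+1)))"
      using sf sg A B by (intro add_mono mult_left_mono) auto
    also have "\<dots> < \<epsilon>/2 + \<epsilon>/2"
    proof (rule add_less_le_mono)
      show "A * (\<epsilon>/(2*(A+1))) < \<epsilon>/2" using A \<epsilon> by (simp add: field_simps)
      show "B * (\<epsilon>/(2*(B+1))) \<le> \<epsilon>/2" using B \<epsilon> by (simp add: field_simps)
    qed
    finally show "(\<Sum>i<n. norm (h (q i) - h (p i))) < \<epsilon>" by simp
  qed
qed

lemma ac_cong:
  assumes f: "abs_cont_on f a b" and eq: "\<And>t. t \<in> {a..b} \<Longrightarrow> g t = f t"
  shows "abs_cont_on g a b"
  by (rule ac_combine[OF f f, of 1 0]) (simp_all add: eq)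

lemma ac_linear:
  assumes L: "bounded_linear L" and f: "abs_cont_on f a b"
  shows "abs_cont_on (\<lambda>t. L (f t)) a b"
proof -
  obtain K where K: "\<And>x. norm (L x) \<le> norm x * K" using bounded_linear.bounded[OF L] by blast
  show ?thesis
  proof (rule ac_combine[OF f f, of "\<bar>K\<bar>" 0])
    fix t t' 
    have "norm (L (f t) - L (f t')) = norm (L (f t - f t'))" by (simp add: linear_diff[OF bounded_linear.linear[OF L]])
    also have "\<dots> \<le> norm (f t - f t') * K" by (rule K)
    also have "\<dots> \<le> \<bar>K\<bar> * norm (f t - f t')" by (simp add: mult.commute mult_right_mono)
    finally show "norm (L (f t) - L (f t')) \<le> \<bar>K\<bar> * norm (f t - f t') + 0 * norm (f t - f t')" by simp
  qed auto
qed

lemma ac_bounded: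
  assumes "abs_cont_on f a b"
  obtains M where "M \<ge> 0" "\<And>t. t \<in> {a..b} \<Longrightarrow> norm (f t) \<le> M"
proof -
  have "compact (f ` {a..b})" using compact_continuous_image[OF ac_continuous[OF assms]] by simp
  from compact_imp_bounded[OF this] obtain M where "\<forall>y\<in>f ` {a..b}. norm y \<le> M" unfolding bounded_iff by blast
  then have "\<And>t. t \<in> {a..b} \<Longrightarrow> norm (f t) \<le> max M 0" by force
  then show ?thesis using that[of "max M 0"] by simp
qed

lemma ac_bilinear:
  assumes P: "bounded_bilinear P" and f: "abs_cont_on f a b" and g: "abs_cont_on g a b"
  shows "abs_cont_on (\<lambda>t. P (f t) (g t)) a b"
proof -
  obtain K where K0: "K \<ge> 0" and K: "\<And>x y. norm (P x y) \<le> norm x * norm y * K"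
    using bounded_bilinear.nonneg_bounded[OF P] by blast
  obtain Mf where Mf: "Mf \<ge> 0" "\<And>t. t \<in> {a..b} \<Longrightarrow> norm (f t) \<le> Mf" using ac_bounded[OF f] by blast
  obtain Mg where Mg: "Mg \<ge> 0" "\<And>t. t \<in> {a..b} \<Longrightarrow> norm (g t) \<le> Mg" using ac_bounded[OF g] by blast
  show ?thesis
  proof (rule ac_combine[OF f g, of "Mg * K" "Mf * K"])
    show "Mg * K \<ge> 0" "Mf * K \<ge> 0" using K0 Mf Mg by simp_all
    fix t t' assume t: "t \<in> {a..b}" and t': "t' \<in> {a..b}"
    have "P (f t) (g t) - P (f t') (g t') = P (f t - f t') (g t) + P (f t') (g t - g t')"
      by (simp add: bounded_bilinear.diff_left[OF P] bounded_bilinear.diff_right[OF P])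
    then have "norm (P (f t) (g t) - P (f t') (g t')) \<le> norm (P (f t - f t') (g t)) + norm (P (f t') (g t - g t'))"
      by (metis norm_triangle_ineq)
    also have "\<dots> \<le> norm (f t - f t') * norm (g t) * K + norm (f t') * norm (g t - g t') * K"
      by (rule add_mono[OF K K])
    also have "\<dots> \<le> norm (f t - f t') * Mg * K + Mf * norm (g t - g t') * K"
      using Mf Mg t t' K0
      by (intro add_mono mult_right_mono mult_left_mono) auto
    finally show "norm (P (f t) (g t) - P (f t') (g t')) \<le> Mg * K * norm (f t - f t') + Mf * K * norm (g t - g t')"
      by (simp add: algebra_simps)
  qed
qed

lemma ac_pair:
  assumes f: "abs_cont_on f a b" and g: "abs_cont_on g a b"
  shows "abs_cont_on (\<lambda>t. (f t, g t)) a b"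
proof (rule ac_combine[OF f g, of 1 1])
  fix t t'
  have "norm ((f t, g t) - (f t', g t')) = norm (f t - f t', g t - g t')" by simp
  also have "\<dots> \<le> norm (f t - f t') + norm (g t - g t')" by (rule norm_Pair_le)
  finally show "norm ((f t, g t) - (f t', g t')) \<le> 1 * norm (f t - f t') + 1 * norm (g t - g t')" by simp
qed auto



definition dJ :: "'a option \<Rightarrow> real" where "dJ i = (if i = None then -1 else 1)"
lemma Jmat_alt: "(Jmat::('m::finite) lmat) = (\<chi> i j. if i = j then dJ i else 0)"
  unfolding Jmat_def dJ_def by simp
lemma dJ_sq [simp]: "dJ i * dJ i = 1" by (simp add: dJ_def)
lemma mult_J_right: "((A::real^'m option^'n) ** (Jmat::('m::finite) lmat)) $ i $ j = A $ i $ j * dJ j"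
  by (simp add: matrix_matrix_mult_def Jmat_alt if_distrib[of "\<lambda>x. _ * x"] cong: if_cong)
lemma mult_J_left: "((Jmat::('m::finite) lmat) ** (A::real^'n^'m option)) $ i $ j = dJ i * A $ i $ j"
  by (simp add: matrix_matrix_mult_def Jmat_alt if_distrib[of "\<lambda>x. x * _"] cong: if_cong)
lemma J_vec: "((Jmat::('m::finite) lmat) *v x) $ i = dJ i * x $ i"
  by (simp add: matrix_vector_mult_def Jmat_alt if_distrib[of "\<lambda>x. x * _"] cong: if_cong)
lemma sum_option: "(\<Sum>i\<in>(UNIV::'a option set). f i) = f None + (\<Sum>k\<in>(UNIV::'a::finite set). f (Some k))"
proof -
  have "sum f (insert None (range Some)) = f None + sum f (range Some)" by (rule sum.insert) auto
  moreover have "sum f (range Some) = (\<Sum>k\<in>UNIV. f (Some k))" by (simp add: sum.reindex)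
  ultimately show ?thesis by (simp add: UNIV_option_conv[symmetric])
qed

lemma Jmat_transpose [simp]: "transpose (Jmat::('m::finite) lmat) = Jmat"
  by (simp add: transpose_def Jmat_def vec_eq_iff)

lemma Jmat_sq [simp]: "(Jmat::('m::finite) lmat) ** Jmat = mat 1"
  unfolding vec_eq_iff mult_J_left by (simp add: Jmat_alt mat_def)


lemma dot_mv: "((A::real^'n^'m) *v x) \<bullet> y = x \<bullet> (transpose A *v y)"
  by (metis dot_lmul_matrix transpose_matrix_vector transpose_transpose)

lemma linner_sym: "linner x y = linner y x"
  unfolding linner_def by (metis dot_mv Jmat_transpose inner_commute)

lemma linner_expand: "linner x y = - (x $ None * y $ None) + (\<Sum>k\<in>UNIV. x $ Some k * y $ Some k)"
  unfolding linner_def inner_vec_def by (simp add: sum_option J_vec dJ_def)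

lemma linner_add_left: "linner (x + y) z = linner x z + linner y z"
  by (simp add: linner_def inner_add_left)
lemma linner_add_right: "linner z (x + y) = linner z x + linner z y"
  by (simp add: linner_def inner_add_right matrix_vector_right_distrib)
lemma linner_diff_left: "linner (x - y) z = linner x z - linner y z"
  by (simp add: linner_def inner_diff_left)
lemma linner_diff_right: "linner z (x - y) = linner z x - linner z y"
  by (simp add: linner_def inner_diff_right matrix_vector_mult_diff_distrib)
lemma linner_scale_left: "linner (c *\<^sub>R x) z = c * linner x z"
  by (simp add: linner_def)
lemma linner_scale_right: "linner z (c *\<^sub>R x) = c * linner z x"
  by (simp add: linner_def matrix_vector_mult_scaleR)
lemma linner_zero_left [simp]: "linner 0 z = 0" by (simp add: linner_def)
lemma linner_zero_right [simp]: "linner z 0 = 0" by (simp add: linner_def)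

lemma linner_bl: "bounded_linear (\<lambda>v. linner v c)"
  unfolding linner_def by (rule bounded_linear_inner_left)

lemma outer_mv: "outer a b *v w = (b \<bullet> w) *\<^sub>R a"
  by (simp add: outer_def matrix_vector_mult_def inner_vec_def vec_eq_iff sum_distrib_left algebra_simps)

lemma transpose_outer: "transpose (outer a b) = outer b a"
  by (simp add: outer_def transpose_def vec_eq_iff)

lemma O1_linner:
  assumes "X \<in> O1"
  shows "linner (X *v a) (X *v b) = linner a b"
proof -
  have "linner (X *v a) (X *v b) = a \<bullet> (transpose X *v (Jmat *v (X *v b)))"
    unfolding linner_def by (rule dot_mv)
  also have "\<dots> = a \<bullet> ((transpose X ** Jmat ** X) *v b)" by (simp add: matrix_vector_mul_assoc matrix_mul_assoc)
  also have "\<dots> = linner a b" using assms unfolding O1_def linner_def by simp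
  finally show ?thesis .
qed

lemma O1_from_right:
  fixes A :: "('m::finite) lmat"
  assumes "A ** Jmat ** transpose A = Jmat"
  shows "A \<in> O1"
proof -
  have "(A ** Jmat) ** (transpose A ** Jmat) = (A ** Jmat ** transpose A) ** Jmat"
    by (simp add: matrix_mul_assoc)
  also have "\<dots> = mat 1" using assms by simp
  finally have "(transpose A ** Jmat) ** (A ** Jmat) = mat 1"
    using matrix_left_right_inverse by blast
  then have "((transpose A ** Jmat) ** (A ** Jmat)) ** Jmat = Jmat" by simp
  moreover have "((transpose A ** Jmat) ** (A ** Jmat)) ** Jmat = transpose A ** Jmat ** A"
    by (simp add: matrix_mul_assoc[symmetric])
  ultimately show ?thesis unfolding O1_def by simp
qed

lemma O1_inv:
  fixes X :: "('m::finite) lmat"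
  assumes "X \<in> O1"
  shows "X ** (Jmat ** transpose X ** Jmat) = mat 1" "(Jmat ** transpose X ** Jmat) ** X = mat 1"
proof -
  have "(Jmat ** transpose X ** Jmat) ** X = Jmat ** (transpose X ** Jmat ** X)"
    by (simp add: matrix_mul_assoc)
  also have "\<dots> = mat 1" using assms unfolding O1_def by simp
  finally show 2: "(Jmat ** transpose X ** Jmat) ** X = mat 1" .
  then show "X ** (Jmat ** transpose X ** Jmat) = mat 1"
    using matrix_left_right_inverse by blast
qed

lemma matrix_inv_eq:
  fixes A B :: "real^'n^'n"
  assumes "A ** B = mat 1" "B ** A = mat 1"
  shows "matrix_inv A = B"
proof -
  have "\<exists>C. A ** C = mat 1 \<and> C ** A = mat 1" using assms by blast
  from someI_ex[OF this] have C: "A ** matrix_inv A = mat 1 \<and> matrix_inv A ** A = mat 1"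
    unfolding matrix_inv_def .
  have "matrix_inv A = matrix_inv A ** (A ** B)" using assms by simp
  also have "\<dots> = B" using C by (simp add: matrix_mul_assoc)
  finally show ?thesis .
qed

lemma O1_matrix_inv:
  fixes X :: "('m::finite) lmat"
  assumes "X \<in> O1"
  shows "matrix_inv X = Jmat ** transpose X ** Jmat"
  using matrix_inv_eq O1_inv[OF assms] by blast

lemma O1_transpose_right:
  fixes X :: "('m::finite) lmat"
  assumes "X \<in> O1"
  shows "X ** Jmat ** transpose X = Jmat"
proof -
  have "X ** Jmat ** transpose X = (X ** (Jmat ** transpose X ** Jmat)) ** Jmat"
    by (simp add: matrix_mul_assoc[symmetric])
  also have "\<dots> = Jmat" using O1_inv(1)[OF assms] by simp
  finally show ?thesis .
qed

lemma J_J_left [simp]: "(Jmat::('m::finite) lmat) ** (Jmat ** Y) = Y"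
proof -
  have "(Jmat::('m::finite) lmat) ** (Jmat ** Y) = (Jmat ** Jmat) ** Y" by (rule matrix_mul_assoc)
  then show ?thesis by simp
qed

lemma O1_transpose_right':
  fixes X :: "('m::finite) lmat"
  assumes "X \<in> O1"
  shows "X ** (Jmat ** (transpose X ** Y)) = Jmat ** Y"
proof -
  have "X ** (Jmat ** (transpose X ** Y)) = (X ** Jmat ** transpose X) ** Y"
    by (simp add: matrix_mul_assoc)
  then show ?thesis using O1_transpose_right[OF assms] by simp
qed

lemma O1_inv_O1:
  fixes X :: "('m::finite) lmat"
  assumes "X \<in> O1"
  shows "Jmat ** transpose X ** Jmat \<in> O1"
proof -
  have "transpose (Jmat ** transpose X ** Jmat) ** Jmat ** (Jmat ** transpose X ** Jmat)
      = Jmat ** (X ** (Jmat ** (transpose X ** Jmat)))"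
    by (simp add: matrix_transpose_mul matrix_mul_assoc[symmetric])
  also have "\<dots> = Jmat" using O1_transpose_right'[OF assms, of Jmat] by simp
  finally show ?thesis unfolding O1_def by simp
qed

lemma time_block_inv: "time_block (Jmat ** transpose X ** (Jmat::('m::finite) lmat)) = time_block X"
  by (simp add: time_block_def mult_J_right mult_J_left transpose_def)

lemma space_block_inv: "space_block (Jmat ** transpose X ** (Jmat::('m::finite) lmat)) = transpose (space_block X)"
  by (simp add: space_block_def mult_J_right mult_J_left transpose_def vec_eq_iff dJ_def)

lemma O1pp_inv:
  fixes X :: "('m::finite) lmat"
  assumes "X \<in> O1pp"
  shows "Jmat ** transpose X ** Jmat \<in> O1pp"
proof -
  have "X \<in> O1" "time_block X > 0" "det (space_block X) > 0" using assms unfolding O1pp_def by auto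
  then show ?thesis using O1_inv_O1[of X] unfolding O1pp_def
    by (simp add: time_block_inv space_block_inv)
qed

lemma O1_time_block:
  fixes X :: "('m::finite) lmat"
  assumes "X \<in> O1"
  shows "time_block X \<noteq> 0"
proof -
  define e :: "'m lvec" where "e = axis None 1"
  have "linner (X *v e) (X *v e) = linner e e" by (rule O1_linner[OF assms])
  also have "\<dots> = -1" by (simp add: linner_expand e_def axis_def)
  finally have f1: "- ((X *v e) $ None * (X *v e) $ None) + (\<Sum>k\<in>UNIV. (X *v e) $ Some k * (X *v e) $ Some k) = -1"
    by (simp add: linner_expand)
  have f2: "(X *v e) $ None = time_block X"
    by (simp add: e_def time_block_def matrix_vector_mult_def axis_def if_distrib[of "\<lambda>x. _ * x"] cong: if_cong)
  have f3: "(\<Sum>k\<in>UNIV. (X *v e) $ Some k * (X *v e) $ Some k) \<ge> 0" by (simp add: sum_nonneg)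
  have "time_block X * time_block X \<ge> 1" using f1 f3 unfolding f2 by linarith
  then show ?thesis by (cases "time_block X = 0") auto
qed

lemma O1_space_block:
  fixes X :: "('m::finite) lmat"
  assumes "X \<in> O1"
  shows "det (space_block X) \<noteq> 0"
proof -
  have "inj ((*v) (space_block X))"
  proof -
    have lin: "linear ((*v) (space_block X))" by (rule matrix_vector_mul_linear)
    have "v = 0" if v: "space_block X *v v = 0" for v
    proof -
      define w :: "'m lvec" where "w = (\<chi> i. case i of None \<Rightarrow> 0 | Some k \<Rightarrow> v $ k)"
      have comp: "(X *v w) $ Some j = (space_block X *v v) $ j" for j
        by (simp add: w_def matrix_vector_mult_def space_block_def sum_option)
      have "linner (X *v w) (X *v w) = linner w w" by (rule O1_linner[OF assms])
      also have "\<dots> = v \<bullet> v" by (simp add: linner_expand w_def inner_vec_def)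
      finally have "v \<bullet> v = - ((X *v w) $ None * (X *v w) $ None)"
        using v comp by (simp add: linner_expand)
      moreover have "(X *v w) $ None * (X *v w) $ None \<ge> 0" by simp
      moreover have "v \<bullet> v \<ge> 0" by simp
      ultimately have "v \<bullet> v = 0" by linarith
      then show "v = 0" by simp
    qed
    then show ?thesis using linear_injective_0[OF lin] by blast
  qed
  then have "det (matrix ((*v) (space_block X))) \<noteq> 0"
    using det_nz_iff_inj[OF matrix_vector_mul_linear, of "space_block X"] by simp
  then show ?thesis by (simp add: matrix_of_matrix_vector_mul)
qed



lemma bb_mm: "bounded_bilinear (\<lambda>(A::real^'n^'m) (B::real^'p^'n). A ** B)"
proof -
  have "bilinear (\<lambda>(A::real^'n^'m) (B::real^'p^'n). A ** B)"
    unfolding bilinear_def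
  proof (intro conjI allI)
    fix A :: "real^'n^'m"
    show "linear (\<lambda>B::real^'p^'n. A ** B)"
      by (rule linearI) (simp_all add: matrix_add_ldistrib matrix_scalar_ac scalar_matrix_assoc[symmetric])
  next
    fix B :: "real^'p^'n"
    show "linear (\<lambda>A::real^'n^'m. A ** B)"
    proof (rule linearI)
      show "(x + y) ** B = x ** B + y ** B" for x y :: "real^'n^'m"
        by (simp add: matrix_matrix_mult_def vec_eq_iff sum.distrib distrib_right)
      show "(c *\<^sub>R x) ** B = c *\<^sub>R (x ** B)" for c and x :: "real^'n^'m"
        by (simp add: scalar_matrix_assoc)
    qed
  qed
  then show ?thesis using bilinear_conv_bounded_bilinear by blast
qed

lemma bb_mv: "bounded_bilinear (\<lambda>(A::real^'n^'m) (v::real^'n). A *v v)"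
proof -
  have "bilinear (\<lambda>(A::real^'n^'m) (v::real^'n). A *v v)"
    unfolding bilinear_def
  proof (intro conjI allI)
    fix A :: "real^'n^'m"
    show "linear (\<lambda>v::real^'n. A *v v)"
      by (rule matrix_vector_mul_linear)
  next
    fix v :: "real^'n"
    show "linear (\<lambda>A::real^'n^'m. A *v v)"
      by (rule linearI) (simp_all add: matrix_vector_mult_add_rdistrib scaleR_matrix_vector_assoc)
  qed
  then show ?thesis using bilinear_conv_bounded_bilinear by blast
qed

lemma bl_transpose: "bounded_linear (transpose :: real^'n^'m \<Rightarrow> real^'m^'n)"
proof -
  have "linear (transpose :: real^'n^'m \<Rightarrow> real^'m^'n)"
    by (rule linearI) (simp_all add: transpose_def vec_eq_iff)
  then show ?thesis using linear_conv_bounded_linear by blast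
qed

lemma bl_Jconj: "bounded_linear (\<lambda>A::('m::finite) lmat. Jmat ** transpose A ** Jmat)"
proof -
  have 1: "bounded_linear (\<lambda>B::('m::finite) lmat. Jmat ** B)"
    by (rule bounded_bilinear.bounded_linear_right[OF bb_mm])
  have 2: "bounded_linear (\<lambda>B::('m::finite) lmat. B ** Jmat)"
    by (rule bounded_bilinear.bounded_linear_left[OF bb_mm])
  show ?thesis
    by (rule bounded_linear_compose[OF 2 bounded_linear_compose[OF 1 bl_transpose]])
qed

lemma continuous_on_det:
  fixes f :: "real \<Rightarrow> real^'n^'n"
  assumes "continuous_on S f"
  shows "continuous_on S (\<lambda>t. det (f t))"
  unfolding det_def
  by (intro continuous_intros assms)

lemma pos_preserve:
  fixes g :: "real \<Rightarrow> real"
  assumes c: "continuous_on {0..\<tau>} g" and nz: "\<And>t. t \<in> {0..\<tau>} \<Longrightarrow> g t \<noteq> 0" and g0: "g 0 > 0"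
    and t: "t \<in> {0..\<tau>}"
  shows "g t > 0"
proof (rule ccontr)
  assume "\<not> g t > 0"
  then have "g t \<le> 0" by simp
  moreover have "continuous_on {0..t} g" using continuous_on_subset[OF c] t by auto
  ultimately obtain x where "0 \<le> x" "x \<le> t" "g x = 0" using IVT2'[of g t 0 0] g0 t by auto
  then show False using nz t by auto
qed

lemma linner_nondeg:
  assumes "\<And>z. linner d (z::('m::finite) lvec) = 0"
  shows "d = 0"
proof -
  have "d $ i = 0" for i
  proof -
    have "linner d (axis i 1) = linner (axis i 1) d" by (rule linner_sym)
    also have "\<dots> = (Jmat *v d) $ i" by (simp add: linner_def inner_axis')
    also have "\<dots> = dJ i * d $ i" by (simp add: J_vec)
    finally have "linner d (axis i 1) = dJ i * d $ i" .
    then show ?thesis using assms[of "axis i 1"] by (simp add: dJ_def split: if_splits)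
  qed
  then show ?thesis by (simp add: vec_eq_iff)
qed

lemma nspace_char:
  fixes y :: "('m::finite) lvec"
  assumes y: "linner y y = 1"
  shows "v \<in> nspace (tspace_sphere y) \<longleftrightarrow> v = linner v y *\<^sub>R y"
proof
  assume v: "v \<in> nspace (tspace_sphere y)"
  have "linner (v - linner v y *\<^sub>R y) z = 0" for z
  proof -
    have "z - linner z y *\<^sub>R y \<in> tspace_sphere y"
      using y by (simp add: tspace_sphere_def linner_diff_left linner_scale_left)
    then have "linner v (z - linner z y *\<^sub>R y) = 0" using v unfolding nspace_def by blast
    then have "linner v z = linner z y * linner v y"
      by (simp add: linner_diff_right linner_scale_right)
    then show ?thesis by (simp add: linner_diff_left linner_scale_left linner_sym[of y z])
  qed
  then show "v = linner v y *\<^sub>R y" using linner_nondeg[of "v - linner v y *\<^sub>R y"] by simp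
next
  assume v: "v = linner v y *\<^sub>R y"
  show "v \<in> nspace (tspace_sphere y)"
    unfolding nspace_def tspace_sphere_def
  proof (intro CollectI ballI)
    fix z assume "z \<in> {v. linner v y = 0}"
    then have "linner z y = 0" by simp
    then show "linner v z = 0" by (subst v) (simp add: linner_scale_left linner_sym[of y z])
  qed
qed

lemma tproj_char:
  fixes y :: "('m::finite) lvec"
  assumes y: "linner y y = 1"
  shows "tproj (tspace_sphere y) v = v - linner v y *\<^sub>R y"
  unfolding tproj_def
proof (rule the_equality)
  have "linner v y *\<^sub>R y \<in> nspace (tspace_sphere y)"
    using y by (simp add: nspace_char[OF y] linner_scale_left)
  then show "v - linner v y *\<^sub>R y \<in> tspace_sphere y \<and> v - (v - linner v y *\<^sub>R y) \<in> nspace (tspace_sphere y)"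
    using y by (simp add: tspace_sphere_def linner_diff_left linner_scale_left)
next
  fix w assume w: "w \<in> tspace_sphere y \<and> v - w \<in> nspace (tspace_sphere y)"
  then have "v - w = linner (v - w) y *\<^sub>R y" using nspace_char[OF y] by blast
  moreover have "linner w y = 0" using w unfolding tspace_sphere_def by simp
  ultimately have "v - w = linner v y *\<^sub>R y" by (simp add: linner_diff_left)
  then show "w = v - linner v y *\<^sub>R y" by (simp add: algebra_simps)
qed

lemma nproj_char:
  fixes y :: "('m::finite) lvec"
  assumes y: "linner y y = 1"
  shows "nproj (tspace_sphere y) v = linner v y *\<^sub>R y"
  unfolding nproj_def tproj_char[OF y] by simp

lemma OmJ:
  "((outer u x0 - outer x0 u) ** (Jmat::('m::finite) lmat)) *v w = linner x0 w *\<^sub>R u - linner u w *\<^sub>R x0"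
  by (simp add: matrix_vector_mul_assoc[symmetric] matrix_vector_mult_diff_rdistrib outer_mv linner_def)



lemma matrix_neg_left: "(- A) ** (B::real^'p^'n) = - ((A::real^'n^'m) ** B)"
  by (simp add: matrix_matrix_mult_def vec_eq_iff sum_negf)
lemma matrix_neg_right: "(A::real^'n^'m) ** (- B) = - (A ** (B::real^'p^'n))"
  by (simp add: matrix_matrix_mult_def vec_eq_iff sum_negf)
lemma transpose_diff: "transpose (A - B) = transpose A - transpose (B::real^'n^'m)"
  by (simp add: transpose_def vec_eq_iff)

lemma Om_transpose: "transpose (outer u x0 - outer x0 u) = - (outer u x0 - outer x0 u)"
  by (simp add: transpose_diff transpose_outer)

lemma H_deriv_zero:
  fixes A W :: "('m::finite) lmat"
  assumes W: "transpose W = - W"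
  shows "(A ** Jmat) ** transpose (A ** W ** Jmat) + (A ** W ** Jmat) ** Jmat ** transpose A = 0"
  by (simp add: matrix_transpose_mul matrix_mul_assoc[symmetric] W matrix_neg_left matrix_neg_right)

lemma Ji_deriv:
  fixes X W :: "('m::finite) lmat"
  assumes W: "transpose W = - W"
  shows "Jmat ** transpose (X ** W ** Jmat) ** Jmat = - ((W ** Jmat) ** (Jmat ** transpose X ** Jmat))"
  by (simp add: matrix_transpose_mul matrix_mul_assoc[symmetric] W matrix_neg_left matrix_neg_right)

lemma neg_mv: "(- A) *v x = - ((A::real^'n^'m) *v x)"
  by (simp add: matrix_vector_mult_def vec_eq_iff sum_negf)

lemma AE_from_null: "N \<in> null_sets M \<Longrightarrow> (\<And>t. t \<notin> N \<Longrightarrow> P t) \<Longrightarrow> AE t in M. P t"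
  by (rule AE_I') auto

lemma space_block_mat1: "space_block (mat 1 :: ('m::finite) lmat) = mat 1"
  by (simp add: space_block_def mat_def vec_eq_iff)

theorem mainTheorem2:
  fixes x0 :: "('m::finite) lvec"
    and \<tau> :: real
    and u s :: "real \<Rightarrow> 'm lvec"
    and R :: "real \<Rightarrow> 'm lmat"
  assumes tau: "0 < \<tau>"
    and x0: "x0 \<in> lsphere"
    and u_ac: "abs_cont_on u 0 \<tau>"
    and u_perp: "\<forall>t\<in>{0..\<tau>}. linner (u t) x0 = 0"
    and sR_ac: "abs_cont_on (\<lambda>t. (s t, R t)) 0 \<tau>"
    and R_GL: "\<forall>t\<in>{0..\<tau>}. invertible (R t)"
    and ode: "AE t in lebesgue. t \<in> {0..\<tau>} \<longrightarrow>
               (s has_vector_derivative u t) (at t within {0..\<tau>}) \<and>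
               (R has_vector_derivative
                  (R t ** (outer (u t) x0 - outer x0 (u t)) ** Jmat)) (at t within {0..\<tau>})"
    and init: "s 0 = 0" "R 0 = mat 1"
  shows "(\<forall>t\<in>{0..\<tau>}. R t \<in> O1pp) \<and>
         (\<forall>G\<in>G1_choices.
            rolling G lsphere tspace_sphere (\<lambda>y. y)
                      (aff_tspace x0) (\<lambda>_. tspace_sphere x0) (\<lambda>_. x0)
                      \<tau> (\<lambda>t. R t *v x0) s (\<lambda>t. matrix_inv (R t))) \<and>
         (\<forall>t\<in>{0..\<tau>}. s t + matrix_inv (R t) *v (R t *v x0) = s t + x0)"
proof -
  define Om where "Om t = outer (u t) x0 - outer x0 (u t)" for t
  have Om_t: "transpose (Om t) = - Om t" for t
    unfolding Om_def by (simp add: transpose_diff transpose_outer)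
  have x0n: "linner x0 x0 = 1" using x0 unfolding lsphere_def by simp
  obtain N where Nsub: "{t \<in> space lebesgue. \<not> (t \<in> {0..\<tau>} \<longrightarrow>
               (s has_vector_derivative u t) (at t within {0..\<tau>}) \<and>
               (R has_vector_derivative
                  (R t ** (outer (u t) x0 - outer x0 (u t)) ** Jmat)) (at t within {0..\<tau>}))} \<subseteq> N"
     and Nm: "emeasure lebesgue N = 0" "N \<in> sets lebesgue"
    using AE_E[OF ode] by blast
  have Nnull: "N \<in> null_sets lebesgue" using Nm by (simp add: null_sets_def)
  have N: "negligible N" using Nnull negligible_iff_null_sets by blast
  have good: "(s has_vector_derivative u t) (at t within {0..\<tau>}) \<and>
              (R has_vector_derivative (R t ** Om t ** Jmat)) (at t within {0..\<tau>})"
    if "t \<in> {0..\<tau>} - N" for t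
    using Nsub that unfolding Om_def by auto
  have R_ac: "abs_cont_on R 0 \<tau>" using ac_linear[OF bounded_linear_snd sR_ac] by simp
  have s_ac: "abs_cont_on s 0 \<tau>" using ac_linear[OF bounded_linear_fst sR_ac] by simp
  have blJ: "bounded_linear (\<lambda>A::'m lmat. A ** Jmat)"
    by (rule bounded_bilinear.bounded_linear_left[OF bb_mm])
  define H where "H t = (R t ** Jmat) ** transpose (R t)" for t
  have H_ac: "abs_cont_on H 0 \<tau>"
    unfolding H_def
    using ac_bilinear[OF bb_mm ac_linear[OF blJ R_ac] ac_linear[OF bl_transpose R_ac]] by simp
  have H_d: "(H has_vector_derivative 0) (at t within {0..\<tau>})" if t: "t \<in> {0..\<tau>} - N" for t
  proof -
    have dR: "(R has_vector_derivative (R t ** Om t ** Jmat)) (at t within {0..\<tau>})" using good[OF t] by blast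
    have "((\<lambda>r. (R r ** Jmat) ** transpose (R r)) has_vector_derivative
        ((R t ** Jmat) ** transpose (R t ** Om t ** Jmat) + (R t ** Om t ** Jmat) ** Jmat ** transpose (R t)))
        (at t within {0..\<tau>})"
      using bounded_bilinear.has_vector_derivative[OF bb_mm
          bounded_linear.has_vector_derivative[OF blJ dR] bounded_linear.has_vector_derivative[OF bl_transpose dR]]
      by simp
    then show ?thesis unfolding H_def using H_deriv_zero[OF Om_t] by simp
  qed
  have H_J: "H t = Jmat" if "t \<in> {0..\<tau>}" for t
  proof -
    have "H t = H 0" by (rule ac_const_on[OF H_ac N H_d that])
    also have "\<dots> = Jmat" unfolding H_def init by simp
    finally show ?thesis .
  qed
  have R_O1: "R t \<in> O1" if "t \<in> {0..\<tau>}" for t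
    using O1_from_right[OF H_J[OF that, unfolded H_def]] .
  have R_cont: "continuous_on {0..\<tau>} R" by (rule ac_continuous[OF R_ac])
  have R_pp: "R t \<in> O1pp" if t: "t \<in> {0..\<tau>}" for t
  proof -
    have "time_block (R t) > 0"
    proof (rule pos_preserve[where g = "\<lambda>t. time_block (R t)", OF _ _ _ t])
      show "continuous_on {0..\<tau>} (\<lambda>t. time_block (R t))"
        unfolding time_block_def by (intro continuous_intros R_cont)
      show "time_block (R t') \<noteq> 0" if "t' \<in> {0..\<tau>}" for t' using O1_time_block[OF R_O1[OF that]] .
      show "time_block (R 0) > 0" by (simp add: init time_block_def mat_def)
    qed
    moreover have "det (space_block (R t)) > 0"
    proof (rule pos_preserve[where g = "\<lambda>t. det (space_block (R t))", OF _ _ _ t])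
      show "continuous_on {0..\<tau>} (\<lambda>t. det (space_block (R t)))"
        unfolding space_block_def by (intro continuous_on_det continuous_intros R_cont)
      show "det (space_block (R t')) \<noteq> 0" if "t' \<in> {0..\<tau>}" for t' using O1_space_block[OF R_O1[OF that]] .
      show "det (space_block (R 0)) > 0" by (simp add: init space_block_mat1)
    qed
    ultimately show ?thesis using R_O1[OF t] unfolding O1pp_def by simp
  qed
  have s_perp: "linner (s t) x0 = 0" if t: "t \<in> {0..\<tau>}" for t
  proof -
    have "linner (s t) x0 = linner (s 0) x0"
    proof (rule ac_const_on[where f = "\<lambda>t. linner (s t) x0", OF ac_linear[OF linner_bl s_ac] N _ t])
      fix r assume r: "r \<in> {0..\<tau>} - N"
      have "((\<lambda>t. linner (s t) x0) has_vector_derivative linner (u r) x0) (at r within {0..\<tau>})"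
        using bounded_linear.has_vector_derivative[OF linner_bl] good[OF r] by blast
      then show "((\<lambda>t. linner (s t) x0) has_vector_derivative 0) (at r within {0..\<tau>})"
        using u_perp r by simp
    qed
    then show ?thesis by (simp add: init)
  qed
  have Xi: "matrix_inv (R t) = Jmat ** transpose (R t) ** Jmat" if "t \<in> {0..\<tau>}" for t
    using O1_matrix_inv[OF R_O1[OF that]] .
  have Xi_pp: "matrix_inv (R t) \<in> O1pp" if "t \<in> {0..\<tau>}" for t
    using O1pp_inv[OF R_pp[OF that]] Xi[OF that] by simp
  have Xi_O1: "matrix_inv (R t) \<in> O1" if "t \<in> {0..\<tau>}" for t
    using Xi_pp[OF that] unfolding O1pp_def by simp
  have XiX: "matrix_inv (R t) *v (R t *v v) = v" if "t \<in> {0..\<tau>}" for t v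
    using O1_inv(2)[OF R_O1[OF that]] Xi[OF that] by (simp add: matrix_vector_mul_assoc)
  have XXi: "R t *v (matrix_inv (R t) *v v) = v" if "t \<in> {0..\<tau>}" for t v
    using O1_inv(1)[OF R_O1[OF that]] Xi[OF that] by (simp add: matrix_vector_mul_assoc)
  have part3: "\<forall>t\<in>{0..\<tau>}. s t + matrix_inv (R t) *v (R t *v x0) = s t + x0"
    using XiX by simp
  have blmv: "bounded_linear (\<lambda>A::'m lmat. A *v x0)"
    by (rule bounded_bilinear.bounded_linear_left[OF bb_mv])
  have dXiF: "W' = matrix_inv (R t) *v F' - (Om t ** Jmat) *v (matrix_inv (R t) *v F t)"
    if t: "t \<in> {0..\<tau>} - N" and dF: "(F has_vector_derivative F') (at t within {0..\<tau>})"
      and dW: "((\<lambda>r. matrix_inv (R r) *v F r) has_vector_derivative W') (at t within {0..\<tau>})"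
    for t F F' W'
  proof -
    have tI: "t \<in> {0..\<tau>}" using t by simp
    have dR: "(R has_vector_derivative (R t ** Om t ** Jmat)) (at t within {0..\<tau>})" using good[OF t] by blast
    have dJi: "((\<lambda>r. Jmat ** transpose (R r) ** Jmat) has_vector_derivative
               (Jmat ** transpose (R t ** Om t ** Jmat) ** Jmat)) (at t within {0..\<tau>})"
      using bounded_linear.has_vector_derivative[OF bl_Jconj dR] by simp
    have "((\<lambda>r. (Jmat ** transpose (R r) ** Jmat) *v F r) has_vector_derivative
          ((Jmat ** transpose (R t) ** Jmat) *v F' + (Jmat ** transpose (R t ** Om t ** Jmat) ** Jmat) *v F t))
          (at t within {0..\<tau>})"
      using bounded_bilinear.has_vector_derivative[OF bb_mv dJi dF] by simp
    then have "((\<lambda>r. matrix_inv (R r) *v F r) has_vector_derivative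
          ((Jmat ** transpose (R t) ** Jmat) *v F' + (Jmat ** transpose (R t ** Om t ** Jmat) ** Jmat) *v F t))
          (at t within {0..\<tau>})"
      by (rule has_vector_derivative_transform_within[OF _ zero_less_one tI]) (simp add: Xi)
    then have "W' = (Jmat ** transpose (R t) ** Jmat) *v F' + (Jmat ** transpose (R t ** Om t ** Jmat) ** Jmat) *v F t"
      using vector_derivative_unique_within_closed_interval[of 0 \<tau> t] tau tI dW by (simp add: cbox_interval)
    then show ?thesis using Ji_deriv[OF Om_t, of "R t"] Xi[OF tI]
      by (simp add: neg_mv matrix_vector_mul_assoc[symmetric])
  qed
  have OmJ_t: "(Om t ** Jmat) *v w = linner x0 w *\<^sub>R u t - linner (u t) w *\<^sub>R x0" for t w
    unfolding Om_def by (rule OmJ)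
  have part2: "\<forall>G\<in>G1_choices.
            rolling G lsphere tspace_sphere (\<lambda>y. y)
                      (aff_tspace x0) (\<lambda>_. tspace_sphere x0) (\<lambda>_. x0)
                      \<tau> (\<lambda>t. R t *v x0) s (\<lambda>t. matrix_inv (R t))"
  proof
    fix G :: "'m lmat set" assume G: "G \<in> G1_choices"
    have ppG: "O1pp \<subseteq> G" using G unfolding G1_choices_def by auto
    have ac1: "abs_cont_on (\<lambda>t. R t *v x0) 0 \<tau>" using ac_linear[OF blmv R_ac] by simp
    have ac2: "abs_cont_on (\<lambda>t. Jmat ** transpose (R t) ** Jmat) 0 \<tau>" using ac_linear[OF bl_Jconj R_ac] by simp
    have ac3: "abs_cont_on (\<lambda>t. (R t *v x0, s t, matrix_inv (R t))) 0 \<tau>"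
    proof (rule ac_cong)
      show "abs_cont_on (\<lambda>t. (R t *v x0, s t, Jmat ** transpose (R t) ** Jmat)) 0 \<tau>"
        by (rule ac_pair[OF ac1 ac_pair[OF s_ac ac2]])
      show "(R t *v x0, s t, matrix_inv (R t)) = (R t *v x0, s t, Jmat ** transpose (R t) ** Jmat)"
        if "t \<in> {0..\<tau>}" for t using Xi[OF that] by simp
    qed
    have pt: "\<forall>t\<in>{0..\<tau>}. R t *v x0 \<in> lsphere \<and> matrix_inv (R t) \<in> G"
      using O1_linner[OF R_O1] x0n Xi_pp ppG unfolding lsphere_def by auto
    show "rolling G lsphere tspace_sphere (\<lambda>y. y)
                      (aff_tspace x0) (\<lambda>_. tspace_sphere x0) (\<lambda>_. x0)
                      \<tau> (\<lambda>t. R t *v x0) s (\<lambda>t. matrix_inv (R t))"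
      unfolding rolling_def Let_def
      apply (intro conjI)
        apply (rule ac3)
       apply (rule pt)
      apply (rule AE_from_null[OF Nnull])
      apply (intro impI conjI)
      subgoal premises p for t
      proof -
        have tI: "t \<in> {0..\<tau>}" using p by simp
        show ?thesis using XiX[OF tI] s_perp[OF tI] unfolding aff_tspace_def tspace_sphere_def
          by (auto simp: add.commute)
      qed
      subgoal premises p for t
      proof -
        have tI: "t \<in> {0..\<tau>}" using p by simp
        show ?thesis
        proof (rule set_eqI, rule iffI)
          fix w assume "w \<in> (\<lambda>v. matrix_inv (R t) *v v) ` tspace_sphere (R t *v x0)"
          then obtain v where v: "linner v (R t *v x0) = 0" and w: "w = matrix_inv (R t) *v v"
            unfolding tspace_sphere_def by auto
          have "linner w x0 = linner (matrix_inv (R t) *v v) (matrix_inv (R t) *v (R t *v x0))"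
            using w XiX[OF tI] by simp
          also have "\<dots> = 0" using O1_linner[OF Xi_O1[OF tI]] v by simp
          finally show "w \<in> tspace_sphere x0" unfolding tspace_sphere_def by simp
        next
          fix w assume w: "w \<in> tspace_sphere x0"
          have "linner (R t *v w) (R t *v x0) = 0"
            using O1_linner[OF R_O1[OF tI]] w unfolding tspace_sphere_def by simp
          then have "R t *v w \<in> tspace_sphere (R t *v x0)" unfolding tspace_sphere_def by simp
          moreover have "w = matrix_inv (R t) *v (R t *v w)" using XiX[OF tI] by simp
          ultimately show "w \<in> (\<lambda>v. matrix_inv (R t) *v v) ` tspace_sphere (R t *v x0)" by blast
        qed
      qed
      subgoal premises p for t
      proof -
        have tI: "t \<in> {0..\<tau>}" using p by simp
        show ?thesis unfolding preserves_G_orient_def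
          using Xi_pp[OF tI] ppG XiX[OF tI] by blast
      qed
      subgoal premises p for t
      proof -
        have tI: "t \<in> {0..\<tau>}" and tN: "t \<in> {0..\<tau>} - N" using p by auto
        have dR: "(R has_vector_derivative (R t ** Om t ** Jmat)) (at t within {0..\<tau>})"
          and ds: "(s has_vector_derivative u t) (at t within {0..\<tau>})" using good[OF tN] by blast+
        have da: "((\<lambda>t. R t *v x0) has_vector_derivative ((R t ** Om t ** Jmat) *v x0)) (at t within {0..\<tau>})"
          using bounded_linear.has_vector_derivative[OF blmv dR] by simp
        have "((\<lambda>t. s t + x0) has_vector_derivative u t) (at t within {0..\<tau>})"
          using has_vector_derivative_add[OF ds has_vector_derivative_const[of x0]] by simp
        then have db: "((\<lambda>t. s t + matrix_inv (R t) *v (R t *v x0)) has_vector_derivative u t) (at t within {0..\<tau>})"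
          by (rule has_vector_derivative_transform_within[OF _ zero_less_one tI]) (simp add: XiX)
        have "matrix_inv (R t) *v ((R t ** Om t ** Jmat) *v x0) = (Om t ** Jmat) *v x0"
          using XiX[OF tI] by (simp add: matrix_vector_mul_assoc[symmetric])
        also have "\<dots> = u t" using OmJ_t[of t x0] x0n u_perp tI by simp
        finally have eq: "u t = matrix_inv (R t) *v ((R t ** Om t ** Jmat) *v x0)" by simp
        show ?thesis by (rule exI, rule exI, intro conjI, rule da, rule db, rule eq)
      qed
      subgoal premises p for t
      proof (intro allI impI)
        have tI: "t \<in> {0..\<tau>}" and tN: "t \<in> {0..\<tau>} - N" using p by auto
        fix Z Z' W'
        assume A: "(\<forall>r\<in>{0..\<tau>}. Z r \<in> tspace_sphere (R r *v x0)) \<and>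
              (Z has_vector_derivative Z') (at t within {0..\<tau>}) \<and>
              ((\<lambda>r. matrix_inv (R r) *v Z r) has_vector_derivative W') (at t within {0..\<tau>})"
        define y where "y = R t *v x0"
        define Xi' where "Xi' = matrix_inv (R t)"
        have yn: "linner y y = 1" using O1_linner[OF R_O1[OF tI]] x0n unfolding y_def by simp
        have Xiy: "Xi' *v y = x0" using XiX[OF tI] unfolding y_def Xi'_def by simp
        have Xil: "linner (Xi' *v a) (Xi' *v b) = linner a b" for a b
          using O1_linner[OF Xi_O1[OF tI]] unfolding Xi'_def by simp
        have W': "W' = Xi' *v Z' - (Om t ** Jmat) *v (Xi' *v Z t)"
          using dXiF[OF tN] A unfolding Xi'_def by blast
        have Zt: "linner (Z t) y = 0" using A tI unfolding tspace_sphere_def y_def by auto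
        have lw: "linner (Xi' *v Z t) x0 = 0" using Xil[of "Z t" y] Zt Xiy by simp
        define c where "c = linner (u t) (Xi' *v Z t)"
        have W'2: "W' = Xi' *v Z' + c *\<^sub>R x0"
          using W' OmJ_t[of t "Xi' *v Z t"] lw unfolding c_def by (simp add: linner_sym[of x0 "Xi' *v Z t"])
        have key: "linner (Xi' *v Z') x0 = linner Z' y" using Xil[of Z' y] Xiy by simp
        have "Xi' *v tproj (tspace_sphere y) Z' = Xi' *v Z' - linner Z' y *\<^sub>R x0"
          using tproj_char[OF yn] Xiy by (simp add: matrix_vector_mult_diff_distrib matrix_vector_mult_scaleR)
        also have "\<dots> = tproj (tspace_sphere x0) W'"
        proof -
          have lW: "linner W' x0 = linner Z' y + c" using W'2 key x0n by (simp add: linner_add_left linner_scale_left)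
          have "tproj (tspace_sphere x0) W' = W' - linner W' x0 *\<^sub>R x0" by (rule tproj_char[OF x0n])
          also have "\<dots> = Xi' *v Z' - linner Z' y *\<^sub>R x0" unfolding lW unfolding W'2 by (simp add: scaleR_left_distrib)
          finally show ?thesis by simp
        qed
        finally show "matrix_inv (R t) *v tproj (tspace_sphere (R t *v x0)) Z' = tproj (tspace_sphere x0) W'"
          unfolding y_def Xi'_def .
      qed
      subgoal premises p for t
      proof (intro allI impI)
        have tI: "t \<in> {0..\<tau>}" and tN: "t \<in> {0..\<tau>} - N" using p by auto
        fix \<Psi> \<Psi>' W'
        assume A: "(\<forall>r\<in>{0..\<tau>}. \<Psi> r \<in> nspace (tspace_sphere (R r *v x0))) \<and>
              (\<Psi> has_vector_derivative \<Psi>') (at t within {0..\<tau>}) \<and>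
              ((\<lambda>r. matrix_inv (R r) *v \<Psi> r) has_vector_derivative W') (at t within {0..\<tau>})"
        define y where "y = R t *v x0"
        define Xi' where "Xi' = matrix_inv (R t)"
        have yn: "linner y y = 1" using O1_linner[OF R_O1[OF tI]] x0n unfolding y_def by simp
        have Xiy: "Xi' *v y = x0" using XiX[OF tI] unfolding y_def Xi'_def by simp
        have Xil: "linner (Xi' *v a) (Xi' *v b) = linner a b" for a b
          using O1_linner[OF Xi_O1[OF tI]] unfolding Xi'_def by simp
        have W': "W' = Xi' *v \<Psi>' - (Om t ** Jmat) *v (Xi' *v \<Psi> t)"
          using dXiF[OF tN] A unfolding Xi'_def by blast
        define c where "c = linner (\<Psi> t) y"
        have "\<Psi> t \<in> nspace (tspace_sphere y)" using A tI unfolding y_def by blast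
        then have Pt: "\<Psi> t = c *\<^sub>R y" using nspace_char[OF yn] unfolding c_def by blast
        have "(Om t ** Jmat) *v x0 = u t" using OmJ_t[of t x0] x0n u_perp tI by simp
        then have W'2: "W' = Xi' *v \<Psi>' - c *\<^sub>R u t"
          using W' Pt Xiy by (simp add: matrix_vector_mult_scaleR)
        have key: "linner (Xi' *v \<Psi>') x0 = linner \<Psi>' y" using Xil[of \<Psi>' y] Xiy by simp
        have "Xi' *v nproj (tspace_sphere y) \<Psi>' = linner \<Psi>' y *\<^sub>R x0"
          using nproj_char[OF yn] Xiy by (simp add: matrix_vector_mult_scaleR)
        also have "\<dots> = nproj (tspace_sphere x0) W'"
          using nproj_char[OF x0n] W'2 key u_perp tI
          by (simp add: linner_diff_left linner_scale_left)
        finally show "matrix_inv (R t) *v nproj (tspace_sphere (R t *v x0)) \<Psi>' = nproj (tspace_sphere x0) W'"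
          unfolding y_def Xi'_def .
      qed
      done
  qed
  show ?thesis using R_pp part2 part3 by blast
qed


end
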